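(* Let $k\ge1$ and $\gamma_1,\dots,\gamma_k\in\mathbb{R}$, and define $f:\mathbb{R}\to\mathbb{R}$ by $f(\omega)=\frac1k\sum_{j=1}^k\cos(\omega\gamma_j)$. Then for every $\alpha>0$, $\sup_{\omega\in[\alpha,100\alpha]}f(\omega)\ge-\frac15$. *)

theory Defs
  imports "HOL-Analysis.Analysis"
begin

end

theory Submission
  imports Defs
begin

lemma cos_multiples:
  fixes x :: real
  defines "c \<equiv> cos x"
  shows "cos (2*x) = 2*c^2 - 1" "cos (3*x) = 4*c^3 - 3*c"
    "cos (4*x) = 8*c^4 - 8*c^2 + 1" "cos (5*x) = 16*c^5 - 20*c^3 + 5*c"
proof -
  have s: "sin x ^ 2 = 1 - c^2" unfolding c_def by (simp add: sin_squared_eq)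
  show 2: "cos (2*x) = 2*c^2 - 1" unfolding c_def by (simp add: cos_double_cos)
  have s2: "sin (2*x) = 2 * sin x * c" unfolding c_def by (simp add: sin_double)
  have "cos (3*x) = cos (2*x + x)" by simp
  also have "\<dots> = cos (2*x) * c - sin (2*x) * sin x" unfolding c_def by (rule cos_add)
  also have "\<dots> = (2*c^2-1)*c - 2*(sin x^2)*c" using 2 s2 by (simp add: power2_eq_square)
  also have "\<dots> = (2*c^2-1)*c - 2*(1-c^2)*c" using s by simp
  also have "\<dots> = 4*c^3 - 3*c" by (simp add: algebra_simps power2_eq_square power3_eq_cube)
  finally show 3: "cos (3*x) = 4*c^3 - 3*c" .
  have "cos (4*x) = cos (2*(2*x))" by simp
  also have "\<dots> = 2*(cos (2*x))^2 - 1" by (rule cos_double_cos)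
  also have "\<dots> = 2*(2*c^2-1)^2 - 1" using 2 by simp
  also have "\<dots> = 8*c^4 - 8*c^2 + 1" by (simp add: algebra_simps power2_eq_square power4_eq_xxxx)
  finally show "cos (4*x) = 8*c^4 - 8*c^2 + 1" .
  have "cos (5*x) = cos (3*x + 2*x)" by simp
  also have "\<dots> = cos (3*x) * cos (2*x) - sin (3*x) * sin (2*x)" by (rule cos_add)
  also have "sin (3*x) = sin (2*x + x)" by simp
  also have "\<dots> = sin (2*x) * c + cos (2*x) * sin x" unfolding c_def by (rule sin_add)
  finally have "cos (5*x) = (4*c^3 - 3*c) * (2*c^2-1) - (2 * sin x * c * c + (2*c^2-1) * sin x) * (2 * sin x * c)"
    using 2 3 s2 by simp
  also have "\<dots> = (4*c^3 - 3*c) * (2*c^2-1) - (2 * c * c + (2*c^2-1)) * 2 * c * (sin x ^2)"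
    by (simp add: algebra_simps power2_eq_square)
  also have "\<dots> = 16*c^5 - 20*c^3 + 5*c" unfolding s by (simp add: algebra_simps power2_eq_square power3_eq_cube eval_nat_numeral)
  finally show "cos (5*x) = 16*c^5 - 20*c^3 + 5*c" .
qed

lemma fejer5:
  fixes x :: real
  shows "(\<Sum>m=1..5. (6 - real m) * cos (real m * x)) \<ge> -3"
proof -
  define c where "c = cos x"
  have c1: "c \<ge> -1" unfolding c_def by simp
  have sum5: "(\<Sum>m=1..5. (6 - real m) * cos (real m * x)) = 5*cos x + 4*cos(2*x) + 3*cos(3*x) + 2*cos(4*x) + cos(5*x)"
    by (simp add: numeral_eq_Suc)
  have e: "(\<Sum>m=1..5. (6 - real m) * cos (real m * x)) + 3 = (c+1) * (4*c^2-1)^2"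
    unfolding sum5 cos_multiples[of x] c_def[symmetric]
    by (simp add: algebra_simps power2_eq_square power3_eq_cube power4_eq_xxxx eval_nat_numeral)
  have "(c+1) * (4*c^2-1)^2 \<ge> 0" using c1 by simp
  thus ?thesis using e by linarith
qed

theorem mainTheorem3:
  fixes k :: nat and \<gamma> :: "nat \<Rightarrow> real" and f :: "real \<Rightarrow> real" and \<alpha> :: real
  assumes "k \<ge> 1"
    and "\<And>\<omega>. f \<omega> = (1 / real k) * (\<Sum>j=1..k. cos (\<omega> * \<gamma> j))"
    and "\<alpha> > 0"
  shows "(SUP \<omega>\<in>{\<alpha>..100 * \<alpha>}. f \<omega>) \<ge> - 1 / 5"
proof -
  have kpos: "real k > 0" using assms(1) by simp
  have fle: "f w \<le> 1" for w
  proof -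
    have "(\<Sum>j=1..k. cos (w * \<gamma> j)) \<le> (\<Sum>j=1..k. 1)" by (rule sum_mono) simp
    thus ?thesis using kpos by (simp add: assms(2) divide_simps)
  qed
  have sumf: "(\<Sum>m=1..5. (6 - real m) * f (real m * \<alpha>)) \<ge> -3"
  proof -
    have "(\<Sum>m=1..5. (6 - real m) * f (real m * \<alpha>))
        = (1 / real k) * (\<Sum>j=1..k. \<Sum>m=1..5. (6 - real m) * cos (real m * (\<alpha> * \<gamma> j)))"
      by (simp add: assms(2) sum_distrib_left sum_distrib_right mult_ac )
         (rule sum.swap)
    also have "\<dots> \<ge> (1 / real k) * (\<Sum>j=1..k. -3)"
      using kpos by (intro mult_left_mono sum_mono fejer5) auto
    finally show ?thesis using kpos by simp
  qed
  obtain m where m: "m \<in> {1..5::nat}" "f (real m * \<alpha>) \<ge> -1/5"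
  proof (rule ccontr)
    assume "\<not> thesis"
    hence lt: "\<And>m. m \<in> {1..5::nat} \<Longrightarrow> f (real m * \<alpha>) < -1/5" using that by force
    have "(\<Sum>m=1..5. (6 - real m) * f (real m * \<alpha>)) < (\<Sum>m=1..5::nat. (6 - real m) * (-1/5))"
    proof (rule sum_strict_mono)
      fix m :: nat assume "m \<in> {1..5}"
      thus "(6 - real m) * f (real m * \<alpha>) < (6 - real m) * (-1/5)"
        using lt[of m] by (intro mult_strict_left_mono) auto
    qed auto
    also have "\<dots> = -3" by (simp add: numeral_eq_Suc)
    finally show False using sumf by simp
  qed
  have mem: "real m * \<alpha> \<in> {\<alpha>..100 * \<alpha>}" using m(1) assms(3) by auto
  have "bdd_above (f ` {\<alpha>..100 * \<alpha>})" using fle by (intro bdd_aboveI) auto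
  hence "f (real m * \<alpha>) \<le> (SUP \<omega>\<in>{\<alpha>..100 * \<alpha>}. f \<omega>)" using mem by (rule cSUP_upper[rotated])
  thus ?thesis using m(2) by linarith
qed

end
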